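(* Fix $q\in(1/2,1)$, integers $K\ge1$, $1\le C\le K/2$, and $\lambda\in[0,1]$. Let $\sigma$ be a state-symmetric strategy with $\sigma(1,k)(C)=1$ for every $k\ge K/2$. Then $\phi_\sigma$ has no fixed point $x\in[0,1]$ satisfying both $\lambda x+(1-\lambda)q>1/2$ and $x\le q$.
   Context: A strategy is a map $\sigma:\{-1,1\}\times\{0,\dots,K\}\to\Delta(\{0,\dots,C\})$, where $\sigma(s,k)$ is the distribution of the number of positive stories (out of $C$ shared) shared by an agent with own story $s$ who sees $k$ positive stories among $K$ in their news feed; feasibility requires $\sigma(s,k)$ to be supported in $[\max(0,C+k-K),\min(k,C)]$. $\mathbb{E}[\sigma(s,k)]$ denotes the mean of $\sigma(s,k)$. $\sigma$ is state symmetric if $\sigma(s,k)(z)=\sigma(-s,K-k)(C-z)$ for all $s,k,z$. The inflow accuracy function of $\sigma$ is $\phi_\sigma(x)=\frac{q+\sum_{k=0}^K P_k(x,\lambda)[q\,\mathbb{E}[\sigma(1,k)]+(1-q)\mathbb{E}[\sigma(-1,k)]]}{1+C}$ with $P_k(x,\lambda)=\mathbb{P}[\mathrm{Binom}(K,\lambda x+(1-\lambda)q)=k]$. *)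

theory Defs
  imports Complex_Main
begin

text \<open>A (mixed) strategy is represented as a function
  sigma s k z = probability that an agent with own story s (in {-1,1}) who sees
  k (in {0..K}) positive stories shares z (in {0..C}) positive stories.
  Values outside these ranges are irrelevant.\<close>

definition strategy :: "nat \<Rightarrow> nat \<Rightarrow> (int \<Rightarrow> nat \<Rightarrow> nat \<Rightarrow> real) \<Rightarrow> bool" where
  "strategy K C sigma \<longleftrightarrow>
     (\<forall>s\<in>{-1,1}. \<forall>k\<in>{0..K}.
        (\<forall>z\<in>{0..C}. sigma s k z \<ge> 0) \<and>
        (\<Sum>z\<in>{0..C}. sigma s k z) = 1 \<and>
        (\<forall>z\<in>{0..C}. sigma s k z \<noteq> 0 \<longrightarrow> max 0 (int C + int k - int K) \<le> int z \<and> z \<le> min k C))"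

definition mean_share :: "nat \<Rightarrow> (int \<Rightarrow> nat \<Rightarrow> nat \<Rightarrow> real) \<Rightarrow> int \<Rightarrow> nat \<Rightarrow> real" where
  "mean_share C sigma s k = (\<Sum>z\<in>{0..C}. real z * sigma s k z)"

definition state_symmetric :: "nat \<Rightarrow> nat \<Rightarrow> (int \<Rightarrow> nat \<Rightarrow> nat \<Rightarrow> real) \<Rightarrow> bool" where
  "state_symmetric K C sigma \<longleftrightarrow>
     (\<forall>s\<in>{-1,1}. \<forall>k\<in>{0..K}. \<forall>z\<in>{0..C}. sigma s k z = sigma (-s) (K - k) (C - z))"

definition binom_prob :: "nat \<Rightarrow> nat \<Rightarrow> real \<Rightarrow> real" where
  "binom_prob K k p = real (K choose k) * p ^ k * (1 - p) ^ (K - k)"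

definition inflow_accuracy ::
  "nat \<Rightarrow> nat \<Rightarrow> real \<Rightarrow> real \<Rightarrow> (int \<Rightarrow> nat \<Rightarrow> nat \<Rightarrow> real) \<Rightarrow> real \<Rightarrow> real" where
  "inflow_accuracy K C q lambda sigma x =
     (q + (\<Sum>k\<in>{0..K}. binom_prob K k (lambda * x + (1 - lambda) * q) *
            (q * mean_share C sigma 1 k + (1 - q) * mean_share C sigma (-1) k))) / (1 + real C)"

end

theory Submission imports Defs begin

lemma core_ineq:
  fixes p r :: real and n :: nat
  assumes "0 \<le> r" "r \<le> p" "p \<le> 1" "1/2 < p" "n \<ge> 1"
  shows "r * (1-p)^n \<le> (1-r) * p^n"
proof -
  obtain m where n: "n = Suc m" using assms(5) by (cases n) auto
  have a: "r*(1-p) \<le> (1-r)*p" using assms by (simp add: algebra_simps)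
  have b: "(1-p)^m \<le> p^m" using assms by (intro power_mono) auto
  have "r * (1-p)^n = (1-p)^m * (r*(1-p))" by (simp add: n algebra_simps)
  also have "\<dots> \<le> p^m * ((1-r)*p)"
  proof (rule mult_mono[OF b a])
    show "0 \<le> p^m" using assms by simp
    show "0 \<le> r*(1-p)" using assms by simp
  qed
  also have "\<dots> = (1-r)*p^n" by (simp add: n algebra_simps)
  finally show ?thesis .
qed

lemma core_strict:
  fixes p r :: real and n :: nat
  assumes "0 \<le> r" "r \<le> p" "p \<le> 1" "1/2 < p" "n \<ge> 2" "r < 1"
  shows "r * (1-p)^n < (1-r) * p^n"
proof -
  obtain m where n: "n = Suc m" and m: "m \<ge> 1" using assms(5) by (cases n) auto
  have a: "r*(1-p) \<le> (1-r)*p" using assms by (simp add: algebra_simps)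
  have b: "(1-p)^m < p^m" using assms m by (intro power_strict_mono) auto
  have c: "(1-r)*p > 0" using assms by simp
  have "r * (1-p)^n = (1-p)^m * (r*(1-p))" by (simp add: n algebra_simps)
  also have "\<dots> \<le> (1-p)^m * ((1-r)*p)"
    using a assms by (intro mult_left_mono) auto
  also have "\<dots> < p^m * ((1-r)*p)"
    using b c by (intro mult_strict_right_mono) auto
  also have "\<dots> = (1-r)*p^n" by (simp add: n algebra_simps)
  finally show ?thesis .
qed

lemma bp_split:
  fixes p :: real
  assumes "j \<le> K" "2*j < K"
  shows "binom_prob K j p = real (K choose j) * (p^j*(1-p)^j) * (1-p)^(K-2*j)"
    and "binom_prob K (K-j) p = real (K choose j) * (p^j*(1-p)^j) * p^(K-2*j)"
proof -
  have e1: "K - j = j + (K - 2*j)" using assms by simp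
  show "binom_prob K j p = real (K choose j) * (p^j*(1-p)^j) * (1-p)^(K-2*j)"
    unfolding binom_prob_def by (subst e1) (simp add: power_add algebra_simps)
  have "K - (K - j) = j" using assms by simp
  moreover have "K choose (K-j) = K choose j" using assms binomial_symmetric[of j K] by simp
  ultimately show "binom_prob K (K-j) p = real (K choose j) * (p^j*(1-p)^j) * p^(K-2*j)"
    unfolding binom_prob_def by (subst e1) (simp add: power_add algebra_simps)
qed

lemma bp_ineq:
  fixes p r :: real
  assumes "0 \<le> r" "r \<le> p" "p \<le> 1" "1/2 < p" "j \<le> K" "2*j < K"
  shows "r * binom_prob K j p \<le> (1-r) * binom_prob K (K-j) p"
proof -
  have "r * (1-p)^(K-2*j) \<le> (1-r) * p^(K-2*j)" using assms by (intro core_ineq) auto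
  moreover have "real (K choose j) * (p^j*(1-p)^j) \<ge> 0" using assms by simp
  ultimately have "real (K choose j) * (p^j*(1-p)^j) * (r * (1-p)^(K-2*j)) \<le>
      real (K choose j) * (p^j*(1-p)^j) * ((1-r) * p^(K-2*j))" by (rule mult_left_mono)
  then show ?thesis unfolding bp_split[OF assms(5,6)] by (simp add: algebra_simps)
qed

lemma bp_strict0:
  fixes p r :: real
  assumes "0 \<le> r" "r \<le> p" "p \<le> 1" "1/2 < p" "2 \<le> K" "r < 1"
  shows "r * binom_prob K 0 p < (1-r) * binom_prob K K p"
  using core_strict[OF assms(1-4) assms(5) assms(6)] by (simp add: binom_prob_def)

lemma bp_nonneg: "0 \<le> p \<Longrightarrow> p \<le> 1 \<Longrightarrow> 0 \<le> binom_prob K k (p::real)"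
  by (simp add: binom_prob_def)

lemma bp_sum: "(\<Sum>k\<in>{0..K}. binom_prob K k (p::real)) = 1"
proof -
  have "(p + (1-p))^K = (\<Sum>k\<le>K. real (K choose k) * p^k * (1-p)^(K-k))"
    by (rule binomial_ring)
  then show ?thesis by (simp add: binom_prob_def atLeast0AtMost)
qed

lemma sum_rev: "(\<Sum>k\<in>{0..K}. f k) = (\<Sum>k\<in>{0..K}. f (K - k)) " for f :: "nat \<Rightarrow> real"
  using sum.atLeastAtMost_rev[of f 0 K] by simp


theorem lemma4:
  fixes q lambda :: real and K C :: nat and sigma :: "int \<Rightarrow> nat \<Rightarrow> nat \<Rightarrow> real"
  assumes "1/2 < q" "q < 1"
    and "K \<ge> 1" "C \<ge> 1" "2 * C \<le> K"
    and "0 \<le> lambda" "lambda \<le> 1"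
    and "strategy K C sigma"
    and "state_symmetric K C sigma"
    and "\<And>k. k \<le> K \<Longrightarrow> real K / 2 \<le> real k \<Longrightarrow> sigma 1 k C = 1"
  shows "\<not> (\<exists>x\<in>{0..1}. inflow_accuracy K C q lambda sigma x = x
              \<and> lambda * x + (1 - lambda) * q > 1/2 \<and> x \<le> q)"
proof
  assume "\<exists>x\<in>{0..1}. inflow_accuracy K C q lambda sigma x = x
              \<and> lambda * x + (1 - lambda) * q > 1/2 \<and> x \<le> q"
  then obtain x where x01: "0 \<le> x" "x \<le> 1" and fxp: "inflow_accuracy K C q lambda sigma x = x"
    and pgt: "lambda * x + (1 - lambda) * q > 1/2" and xq: "x \<le> q" by auto
  define p where "p = lambda * x + (1 - lambda) * q"
  have p_half: "1/2 < p" using pgt p_def by simp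
  have xp: "x \<le> p"
  proof -
    have "(1 - lambda) * x \<le> (1 - lambda) * q" using xq assms(7) by (intro mult_left_mono) auto
    then show ?thesis unfolding p_def by (simp add: algebra_simps)
  qed
  have p1: "p \<le> 1"
  proof -
    have "lambda * x \<le> lambda * 1" using x01 assms(6) by (intro mult_left_mono) auto
    moreover have "(1 - lambda) * q \<le> (1 - lambda) * 1" using assms(2,7) by (intro mult_left_mono) auto
    ultimately show ?thesis unfolding p_def by (simp add: algebra_simps)
  qed
  have p0: "0 \<le> p" using p_half by simp
  define a where "a j = mean_share C sigma 1 j" for j
  define P where "P k = binom_prob K k p" for k
  have Pnn: "\<And>k. 0 \<le> P k" unfolding P_def using p0 p1 by (simp add: bp_nonneg)
  have Psum: "(\<Sum>k\<in>{0..K}. P k) = 1" unfolding P_def by (rule bp_sum)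
  have str: "\<And>s k. s \<in> {-1,1} \<Longrightarrow> k \<le> K \<Longrightarrow>
        (\<forall>z\<in>{0..C}. sigma s k z \<ge> 0) \<and> (\<Sum>z\<in>{0..C}. sigma s k z) = 1 \<and>
        (\<forall>z\<in>{0..C}. sigma s k z \<noteq> 0 \<longrightarrow> max 0 (int C + int k - int K) \<le> int z \<and> z \<le> min k C)"
    using assms(8) unfolding strategy_def by auto
  have a_bounds: "0 \<le> a j \<and> a j \<le> C" if "j \<le> K" for j
  proof -
    from str[of 1 j] that have nn: "\<And>z. z \<in> {0..C} \<Longrightarrow> 0 \<le> sigma 1 j z"
      and s1: "(\<Sum>z\<in>{0..C}. sigma 1 j z) = 1" by auto
    have "0 \<le> a j" unfolding a_def mean_share_def using nn by (intro sum_nonneg) auto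
    moreover have "a j \<le> (\<Sum>z\<in>{0..C}. real C * sigma 1 j z)"
      unfolding a_def mean_share_def using nn by (intro sum_mono mult_right_mono) auto
    moreover have "(\<Sum>z\<in>{0..C}. real C * sigma 1 j z) = C"
      using s1 by (simp add: sum_distrib_left[symmetric])
    ultimately show ?thesis by simp
  qed
  have a_top: "a j = C" if "j \<le> K" "K \<le> 2 * j" for j
  proof -
    from str[of 1 j] that have nn: "\<And>z. z \<in> {0..C} \<Longrightarrow> 0 \<le> sigma 1 j z"
      and s1: "(\<Sum>z\<in>{0..C}. sigma 1 j z) = 1" by auto
    have sC: "sigma 1 j C = 1" using assms(10)[of j] that by simp
    have split: "{0..C} = insert C {0..<C}" by auto
    have "(\<Sum>z\<in>{0..<C}. sigma 1 j z) = 0" using s1 sC unfolding split by simp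
    then have z0: "\<forall>z\<in>{0..<C}. sigma 1 j z = 0"
      using nn by (subst sum_nonneg_eq_0_iff[symmetric]) auto
    show ?thesis unfolding a_def mean_share_def split using sC z0 by simp
  qed
  have a0: "a 0 = 0"
  proof -
    from str[of 1 0] have h: "\<forall>z\<in>{0..C}. sigma 1 0 z \<noteq> 0 \<longrightarrow> z \<le> 0" by auto
    have "\<forall>z\<in>{0..C}. real z * sigma 1 0 z = 0"
    proof
      fix z assume "z \<in> {0..C}" then show "real z * sigma 1 0 z = 0" using h by (cases "z = 0") auto
    qed
    then show ?thesis unfolding a_def mean_share_def by (intro sum.neutral) simp
  qed
  have b_eq: "mean_share C sigma (-1) k = C - a (K - k)" if "k \<le> K" for k
  proof -
    have sym: "\<And>z. z \<in> {0..C} \<Longrightarrow> sigma (-1) k z = sigma 1 (K - k) (C - z)"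
    proof -
      fix z assume z: "z \<in> {0..C}"
      have "\<forall>s\<in>{-1,1}. \<forall>k\<in>{0..K}. \<forall>z\<in>{0..C}. sigma s k z = sigma (-s) (K - k) (C - z)"
        using assms(9) unfolding state_symmetric_def .
      then have "\<forall>k\<in>{0..K}. \<forall>z\<in>{0..C}. sigma (-1) k z = sigma (- (-1)) (K - k) (C - z)"
        by (rule bspec) simp
      then have "sigma (-1) k z = sigma (- (-1)) (K - k) (C - z)" using that z by simp
      then show "sigma (-1) k z = sigma 1 (K - k) (C - z)" by simp
    qed
    from str[of 1 "K-k"] have s1: "(\<Sum>z\<in>{0..C}. sigma 1 (K-k) z) = 1" by auto
    have "mean_share C sigma (-1) k = (\<Sum>z\<in>{0..C}. real z * sigma 1 (K - k) (C - z))"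
      unfolding mean_share_def by (intro sum.cong refl) (simp add: sym)
    also have "\<dots> = (\<Sum>z\<in>{0..C}. real (C - z) * sigma 1 (K - k) (C - (C - z)))"
      by (rule sum_rev)
    also have "\<dots> = (\<Sum>z\<in>{0..C}. real C * sigma 1 (K - k) z - real z * sigma 1 (K - k) z)"
      by (intro sum.cong) (auto simp: of_nat_diff algebra_simps)
    also have "\<dots> = C - a (K - k)"
      unfolding a_def mean_share_def sum_subtractf sum_distrib_left[symmetric] s1 by simp
    finally show ?thesis .
  qed
  define S where "S = (\<Sum>k\<in>{0..K}. P k * (q * a k + (1 - q) * mean_share C sigma (-1) k))"
  have fixeq: "q + S = (1 + real C) * x"
  proof -
    have "inflow_accuracy K C q lambda sigma x = (q + S) / (1 + real C)"
      unfolding inflow_accuracy_def S_def P_def a_def p_def by simp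
    then show ?thesis using fxp by (simp add: field_simps)
  qed
  define T where "T k = (a k - C) * (q * P k - (1 - q) * P (K - k))" for k
  have ST: "S - C * q = (\<Sum>k\<in>{0..K}. T k)"
  proof -
    have "(\<Sum>k\<in>{0..K}. (a k - C) * (1 - q) * P (K - k))
        = (\<Sum>k\<in>{0..K}. (a (K - k) - C) * (1 - q) * P (K - (K - k)))"
      by (rule sum_rev)
    also have "\<dots> = (\<Sum>k\<in>{0..K}. (a (K - k) - C) * (1 - q) * P k)"
      by (intro sum.cong) auto
    finally have r: "(\<Sum>k\<in>{0..K}. (a k - C) * (1 - q) * P (K - k))
        = (\<Sum>k\<in>{0..K}. (a (K - k) - C) * (1 - q) * P k)" .
    have "(\<Sum>k\<in>{0..K}. T k) = (\<Sum>k\<in>{0..K}. (a k - C) * q * P k)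
         - (\<Sum>k\<in>{0..K}. (a k - C) * (1 - q) * P (K - k))"
      unfolding T_def sum_subtractf[symmetric] by (intro sum.cong) (auto simp: algebra_simps)
    also have "\<dots> = (\<Sum>k\<in>{0..K}. P k * (q * a k + (1 - q) * mean_share C sigma (-1) k) - C * q * P k)"
      unfolding r sum_subtractf[symmetric] by (intro sum.cong) (auto simp: b_eq algebra_simps)
    also have "\<dots> = S - C * q"
      unfolding S_def sum_subtractf sum_distrib_left[symmetric] Psum by simp
    finally show ?thesis by simp
  qed
  have T_top: "T k = 0" if "k \<le> K" "K \<le> 2 * k" for k
    unfolding T_def using a_top[OF that] by simp
  show False
  proof (cases "q \<le> p")
    case True
    have Tnn: "0 \<le> T k" if "k \<in> {0..K}" for k
    proof (cases "2 * k < K")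
      case True
      have "q * P k \<le> (1 - q) * P (K - k)" unfolding P_def
        using \<open>q \<le> p\<close> assms(1) p1 p_half that True by (intro bp_ineq) auto
      moreover have "a k - C \<le> 0" using a_bounds[of k] that by simp
      ultimately show ?thesis unfolding T_def by (intro mult_nonpos_nonpos) auto
    next
      case False then show ?thesis using T_top[of k] that by simp
    qed
    have "q * P 0 < (1 - q) * P K" unfolding P_def
      using \<open>q \<le> p\<close> assms(1,2,3,4,5) p1 p_half by (intro bp_strict0) auto
    then have "0 < T 0" unfolding T_def using a0 assms(4) by (simp add: mult_pos_neg)
    also have "T 0 \<le> (\<Sum>k\<in>{0..K}. T k)" using Tnn by (intro member_le_sum) auto
    finally have "C * q < S" using ST by simp
    moreover have "(1 + real C) * x \<le> (1 + real C) * q" using xq by (intro mult_left_mono) auto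
    ultimately show False using fixeq by (simp add: algebra_simps)
  next
    case False
    define g where "g k = (if 2 * k < K then P k + P (K - k) else 0)" for k
    have Tlow: "- (C * (q - p)) * g k \<le> T k" if "k \<in> {0..K}" for k
    proof (cases "2 * k < K")
      case True
      have "p * P k \<le> (1 - p) * P (K - k)" unfolding P_def
        using p1 p_half that True by (intro bp_ineq) auto
      then have cU: "q * P k - (1 - q) * P (K - k) \<le> (q - p) * (P k + P (K - k))"
        by (simp add: algebra_simps)
      have U0: "0 \<le> (q - p) * (P k + P (K - k))" using False Pnn by simp
      have aC: "a k - C \<le> 0" "0 \<le> a k" using a_bounds[of k] that by auto
      have "(a k - C) * ((q - p) * (P k + P (K - k))) \<le> (a k - C) * (q * P k - (1 - q) * P (K - k))"
        using cU aC by (intro mult_left_mono_neg) auto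
      moreover have "0 \<le> a k * ((q - p) * (P k + P (K - k)))" using aC U0 by simp
      ultimately show ?thesis unfolding T_def g_def using True by (simp add: algebra_simps)
    next
      case False then show ?thesis using T_top[of k] that g_def by simp
    qed
    have gsum: "(\<Sum>k\<in>{0..K}. g k) \<le> 1"
    proof -
      have "(\<Sum>k\<in>{0..K}. (if 2 * k < K then P (K - k) else 0))
          = (\<Sum>k\<in>{0..K}. (if 2 * (K - k) < K then P (K - (K - k)) else 0))"
        by (rule sum_rev)
      also have "\<dots> = (\<Sum>k\<in>{0..K}. (if 2 * (K - k) < K then P k else 0))"
        by (intro sum.cong) auto
      finally have r: "(\<Sum>k\<in>{0..K}. (if 2 * k < K then P (K - k) else 0))
          = (\<Sum>k\<in>{0..K}. (if 2 * (K - k) < K then P k else 0))" .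
      have "(\<Sum>k\<in>{0..K}. g k) = (\<Sum>k\<in>{0..K}. (if 2 * k < K then P k else 0))
           + (\<Sum>k\<in>{0..K}. (if 2 * k < K then P (K - k) else 0))"
        unfolding g_def sum.distrib[symmetric] by (intro sum.cong) auto
      also have "\<dots> = (\<Sum>k\<in>{0..K}. (if 2 * k < K then P k else 0) + (if 2 * (K - k) < K then P k else 0))"
        unfolding r sum.distrib by simp
      also have "\<dots> \<le> (\<Sum>k\<in>{0..K}. P k)"
        using Pnn by (intro sum_mono) auto
      finally show ?thesis using Psum by simp
    qed
    have "(\<Sum>k\<in>{0..K}. - (C * (q - p)) * g k) \<le> (\<Sum>k\<in>{0..K}. T k)"
      using Tlow by (intro sum_mono) auto
    moreover have "(\<Sum>k\<in>{0..K}. - (C * (q - p)) * g k) = - (C * (q - p)) * (\<Sum>k\<in>{0..K}. g k)"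
      by (simp add: sum_distrib_left)
    moreover have "- (C * (q - p)) * 1 \<le> - (C * (q - p)) * (\<Sum>k\<in>{0..K}. g k)"
      using gsum False by (intro mult_left_mono_neg) auto
    ultimately have "C * p \<le> S" using ST by (simp add: algebra_simps)
    moreover have "(1 + real C) * x \<le> (1 + real C) * p" using xp by (intro mult_left_mono) auto
    ultimately show False using fixeq False by (simp add: algebra_simps)
  qed
qed

end
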